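(* Let $\theta$, $\epsilon>0$ and $\Lambda$ be as in the context. Let $a,b,d\in\mathbb{Z}$ with $d\neq0$, $(a,b)\neq(0,0)$ and $\gcd(a,b,d)=1$, let $\lambda=a\cos\theta-b\sin\theta$, so that $\lambda^*=a\sin\theta+b\cos\theta$, and let $w=(1,\lambda/d)$. Define $S\subset\mathbb{R}$ by $\{0\}\times S=(\Lambda+w\mathbb{R})\cap(\{0\}\times\mathbb{R})$, where $\Lambda+w\mathbb{R}=\{p+tw:\ p\in\Lambda,\ t\in\mathbb{R}\}$. If $\epsilon\ge 1/|\lambda^*|$, then $S$ is a dense subset of $\mathbb{R}$. If $0<\epsilon<1/|\lambda^*|$, then the closure of $S$ is $$\mathrm{cl}(S)=\left\{\frac{l+t\lambda^*}{d}:\ 0\le t\le\epsilon,\ l\in\mathbb{Z}\right\}.$$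
   Context: Fix $\theta$ with $\tan\theta$ irrational and $\epsilon>0$. Define $\Lambda_F=\{m\cos\theta-n\sin\theta:\ m,n\in\mathbb{Z},\ 0\le m\sin\theta+n\cos\theta<\epsilon\}$ and $\Lambda=\Lambda_F\times\mathbb{Z}\subset\mathbb{R}^2$. For $x=m\cos\theta-n\sin\theta$ with $m,n\in\mathbb{Z}$ (the integers $m,n$ are uniquely determined by $x$ since $\tan\theta$ is irrational), write $x^*=m\sin\theta+n\cos\theta$. *)

theory Defs
  imports "HOL-Analysis.Analysis"
begin

definition LambdaF :: "real \<Rightarrow> real \<Rightarrow> real set" where
  "LambdaF \<theta> \<epsilon> = {of_int m * cos \<theta> - of_int n * sin \<theta> | m n :: int.
      0 \<le> of_int m * sin \<theta> + of_int n * cos \<theta> \<and> of_int m * sin \<theta> + of_int n * cos \<theta> < \<epsilon>}"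

definition Lambda :: "real \<Rightarrow> real \<Rightarrow> (real \<times> real) set" where
  "Lambda \<theta> \<epsilon> = LambdaF \<theta> \<epsilon> \<times> \<int>"

end

theory Submission
  imports Defs
begin

lemma T_closed:
  fixes L \<epsilon> :: real and d :: int
  assumes d: "d \<noteq> 0"
  shows "closed {(of_int l + t * L) / of_int d | l t. 0 \<le> t \<and> t \<le> \<epsilon> \<and> l \<in> (UNIV :: int set)}"
proof -
  let ?I = "(\<lambda>t. t * L) ` {0..\<epsilon>}"
  have cI: "compact ?I"
    by (intro compact_continuous_image continuous_intros compact_Icc)
  have cl: "closed (\<Union>x\<in>(\<int>::real set). \<Union>y\<in>?I. {x + y})"
    by (rule closed_compact_sums[OF closed_Ints cI])
  have eq: "{(of_int l + t * L) / of_int d | l t. 0 \<le> t \<and> t \<le> \<epsilon> \<and> l \<in> (UNIV :: int set)}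
      = (\<lambda>y. of_int d * y) -` (\<Union>x\<in>(\<int>::real set). \<Union>y\<in>?I. {x + y})"
  proof (intro set_eqI iffI)
    fix y assume "y \<in> {(of_int l + t * L) / of_int d | l t. 0 \<le> t \<and> t \<le> \<epsilon> \<and> l \<in> (UNIV :: int set)}"
    then obtain l t where lt: "0 \<le> t" "t \<le> \<epsilon>" "y = (of_int l + t * L) / of_int d" by auto
    then have "of_int d * y = of_int l + t * L" using d by simp
    then show "y \<in> (\<lambda>y. of_int d * y) -` (\<Union>x\<in>(\<int>::real set). \<Union>y\<in>?I. {x + y})"
    proof -
      have "of_int l + t * L \<in> (\<Union>x\<in>(\<int>::real set). \<Union>y\<in>?I. {x + y})"
      proof (rule UN_I[of "of_int l"])
        show "(of_int l :: real) \<in> \<int>" by simp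
        have "t * L \<in> ?I" using lt by auto
        then show "of_int l + t * L \<in> (\<Union>y\<in>?I. {of_int l + y})" by blast
      qed
      then show ?thesis using \<open>of_int d * y = of_int l + t * L\<close> by simp
    qed
  next
    fix y assume "y \<in> (\<lambda>y. of_int d * y) -` (\<Union>x\<in>(\<int>::real set). \<Union>y\<in>?I. {x + y})"
    then obtain x t where x: "x \<in> \<int>" and t: "0 \<le> t" "t \<le> \<epsilon>" and e: "of_int d * y = x + t * L" by auto
    from x obtain l where l: "x = of_int l" by (auto elim: Ints_cases)
    have "y = (of_int l + t * L) / of_int d" using e l d by (simp add: field_simps)
    then show "y \<in> {(of_int l + t * L) / of_int d | l t. 0 \<le> t \<and> t \<le> \<epsilon> \<and> l \<in> (UNIV :: int set)}"
      using t by blast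
  qed
  show ?thesis unfolding eq
    by (intro continuous_closed_vimage cl continuous_intros)
qed

lemma dens:
  fixes \<theta> z r :: real and d :: int
  assumes irr: "tan \<theta> \<notin> \<rat>" and c: "cos \<theta> \<noteq> 0" and d: "d \<noteq> 0" and r: "r > 0"
  shows "\<exists>p q :: int. \<bar>of_int d * (of_int p * sin \<theta> + of_int q * cos \<theta>) - z\<bar> < r"
proof -
  let ?D = "of_int d * cos \<theta>"
  have D: "?D \<noteq> 0" using c d by simp
  have "r / \<bar>?D\<bar> > 0" using D r by simp
  then obtain h k where hk: "\<bar>of_int k * tan \<theta> - of_int h - z / ?D\<bar> < r / \<bar>?D\<bar>"
    using sequence_of_fractional_parts_is_dense[OF irr, of "r / \<bar>?D\<bar>" "z / ?D"] by blast
  have "of_int d * (of_int k * sin \<theta> + of_int (-h) * cos \<theta>) - z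
      = ?D * (of_int k * tan \<theta> - of_int h - z / ?D)"
    using D c by (simp add: tan_def field_simps)
  then have "\<bar>of_int d * (of_int k * sin \<theta> + of_int (-h) * cos \<theta>) - z\<bar>
      = \<bar>?D\<bar> * \<bar>of_int k * tan \<theta> - of_int h - z / ?D\<bar>" by (simp add: abs_mult)
  also have "\<dots> < \<bar>?D\<bar> * (r / \<bar>?D\<bar>)" using hk D by (intro mult_strict_left_mono) auto
  also have "\<dots> = r" using D by simp
  finally show ?thesis by blast
qed

theorem theorem2:
  fixes \<theta> \<epsilon> :: real and a b d :: int
  assumes irr: "tan \<theta> \<notin> \<rat>"
    and eps: "\<epsilon> > 0"
    and d: "d \<noteq> 0"
    and ab: "(a, b) \<noteq> (0, 0)"
    and g: "gcd a (gcd b d) = 1"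
  defines "lam \<equiv> of_int a * cos \<theta> - of_int b * sin \<theta>"
    and "lams \<equiv> of_int a * sin \<theta> + of_int b * cos \<theta>"
  defines "w \<equiv> (1 :: real, lam / of_int d)"
  defines "S \<equiv> {s :: real. (0, s) \<in> {p + t *\<^sub>R w | p t. p \<in> Lambda \<theta> \<epsilon>}}"
  shows "(\<epsilon> \<ge> 1 / \<bar>lams\<bar> \<longrightarrow> closure S = UNIV)
       \<and> (\<epsilon> < 1 / \<bar>lams\<bar> \<longrightarrow>
            closure S = {(of_int l + t * lams) / of_int d | l t. 0 \<le> t \<and> t \<le> \<epsilon> \<and> l \<in> (UNIV :: int set)})"
proof -
  define T where "T = {(of_int l + t * lams) / of_int d | l t. 0 \<le> t \<and> t \<le> \<epsilon> \<and> l \<in> (UNIV :: int set)}"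
  have c0: "cos \<theta> \<noteq> 0" using irr by (auto simp: tan_def)
  have lams0: "lams \<noteq> 0"
  proof
    assume l0: "lams = 0"
    show False
    proof (cases "a = 0")
      case True
      then have "of_int b * cos \<theta> = 0" using l0 lams_def by simp
      then have "b = 0" using c0 by simp
      with True ab show False by simp
    next
      case False
      have "tan \<theta> = - of_int b / of_int a"
        using l0 c0 False unfolding lams_def tan_def by (simp add: field_simps)
      then have "tan \<theta> \<in> \<rat>" by simp
      with irr show False by simp
    qed
  qed
  have ident: "lam * (of_int m * cos \<theta> - of_int n * sin \<theta>)
      = of_int a * of_int m + of_int b * of_int n - lams * (of_int m * sin \<theta> + of_int n * cos \<theta>)"
    for m n :: int
  proof -
    have "lam * (of_int m * cos \<theta> - of_int n * sin \<theta>)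
      = of_int a * of_int m * ((sin \<theta>)\<^sup>2 + (cos \<theta>)\<^sup>2) + of_int b * of_int n * ((sin \<theta>)\<^sup>2 + (cos \<theta>)\<^sup>2)
        - lams * (of_int m * sin \<theta> + of_int n * cos \<theta>)"
    proof -
      have gen: "(A * C - B * Sn) * (M * C - N * Sn) = A * M * (Sn\<^sup>2 + C\<^sup>2) + B * N * (Sn\<^sup>2 + C\<^sup>2)
        - (A * Sn + B * C) * (M * Sn + N * C)" for A B C Sn M N :: real
        by (simp add: power2_eq_square algebra_simps)
      show ?thesis unfolding lam_def lams_def by (rule gen)
    qed
    then show ?thesis by simp
  qed
  have key: "u \<in> S \<longleftrightarrow> (\<exists>k m n::int. 0 \<le> of_int m * sin \<theta> + of_int n * cos \<theta>
      \<and> of_int m * sin \<theta> + of_int n * cos \<theta> < \<epsilon>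
      \<and> u = (of_int d * of_int k - of_int a * of_int m - of_int b * of_int n
              + lams * (of_int m * sin \<theta> + of_int n * cos \<theta>)) / of_int d)" for u
  proof
    assume "u \<in> S"
    then obtain p t where pt: "(0, u) = p + t *\<^sub>R w" and p: "p \<in> Lambda \<theta> \<epsilon>"
      unfolding S_def by blast
    obtain x j where pxj: "p = (x, j)" by (cases p)
    with p have x: "x \<in> LambdaF \<theta> \<epsilon>" and j: "j \<in> \<int>" unfolding Lambda_def by auto
    from x obtain m n :: int where x_eq: "x = of_int m * cos \<theta> - of_int n * sin \<theta>"
      and w1: "0 \<le> of_int m * sin \<theta> + of_int n * cos \<theta>" and w2: "of_int m * sin \<theta> + of_int n * cos \<theta> < \<epsilon>"
      unfolding LambdaF_def by blast
    from j obtain k where k: "j = of_int k" by (auto elim: Ints_cases)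
    from pt pxj have t: "t = - x" and u: "u = j + t * (lam / of_int d)" by (auto simp: w_def)
    have "u = (of_int d * of_int k - lam * x) / of_int d" using u t k d by (simp add: field_simps)
    also have "\<dots> = (of_int d * of_int k - of_int a * of_int m - of_int b * of_int n
              + lams * (of_int m * sin \<theta> + of_int n * cos \<theta>)) / of_int d"
      unfolding x_eq ident by simp
    finally show "\<exists>k m n::int. 0 \<le> of_int m * sin \<theta> + of_int n * cos \<theta>
      \<and> of_int m * sin \<theta> + of_int n * cos \<theta> < \<epsilon>
      \<and> u = (of_int d * of_int k - of_int a * of_int m - of_int b * of_int n
              + lams * (of_int m * sin \<theta> + of_int n * cos \<theta>)) / of_int d"
      using w1 w2 by blast
  next
    assume "\<exists>k m n::int. 0 \<le> of_int m * sin \<theta> + of_int n * cos \<theta>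
      \<and> of_int m * sin \<theta> + of_int n * cos \<theta> < \<epsilon>
      \<and> u = (of_int d * of_int k - of_int a * of_int m - of_int b * of_int n
              + lams * (of_int m * sin \<theta> + of_int n * cos \<theta>)) / of_int d"
    then obtain k m n :: int where w1: "0 \<le> of_int m * sin \<theta> + of_int n * cos \<theta>"
      and w2: "of_int m * sin \<theta> + of_int n * cos \<theta> < \<epsilon>"
      and u: "u = (of_int d * of_int k - of_int a * of_int m - of_int b * of_int n
              + lams * (of_int m * sin \<theta> + of_int n * cos \<theta>)) / of_int d" by blast
    define x where "x = of_int m * cos \<theta> - of_int n * sin \<theta>"
    have x: "x \<in> LambdaF \<theta> \<epsilon>" unfolding LambdaF_def x_def using w1 w2 by blast
    have p: "(x, of_int k) \<in> Lambda \<theta> \<epsilon>" unfolding Lambda_def using x by auto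
    have "u = of_int k - x * (lam / of_int d)"
    proof -
      have "u = (of_int d * of_int k - lam * x) / of_int d"
        unfolding u x_def ident by simp
      then show ?thesis using d by (simp add: field_simps)
    qed
    then have "(0, u) = (x, of_int k) + (- x) *\<^sub>R w" by (simp add: w_def)
    with p show "u \<in> S" unfolding S_def by blast
  qed
  have ST: "S \<subseteq> T"
  proof
    fix u assume "u \<in> S"
    then obtain k m n :: int where w1: "0 \<le> of_int m * sin \<theta> + of_int n * cos \<theta>"
      and w2: "of_int m * sin \<theta> + of_int n * cos \<theta> < \<epsilon>"
      and u: "u = (of_int d * of_int k - of_int a * of_int m - of_int b * of_int n
              + lams * (of_int m * sin \<theta> + of_int n * cos \<theta>)) / of_int d"
      using key by blast
    have "u = (of_int (d * k - a * m - b * n) + (of_int m * sin \<theta> + of_int n * cos \<theta>) * lams) / of_int d"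
      unfolding u by (simp add: algebra_simps)
    then show "u \<in> T" unfolding T_def using w1 w2 by fastforce
  qed
  have TS: "T \<subseteq> closure S"
  proof
    fix y assume "y \<in> T"
    then obtain l t where t0: "0 \<le> t" and t1: "t \<le> \<epsilon>" and y: "y = (of_int l + t * lams) / of_int d"
      unfolding T_def by blast
    obtain u v where uv: "u * a + v * gcd b d = 1" using bezout_int[of a "gcd b d"] g by auto
    obtain u' v' where uv': "u' * b + v' * d = gcd b d" using bezout_int[of b d] by auto
    define m0 where "m0 = - l * u"
    define n0 where "n0 = - l * v * u'"
    define k0 where "k0 = l * v * v'"
    have l_eq: "d * k0 - a * m0 - b * n0 = l"
    proof -
      have "l = l * (u * a + v * (u' * b + v' * d))" using uv uv' by simp
      then show ?thesis unfolding m0_def n0_def k0_def by (simp add: algebra_simps)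
    qed
    show "y \<in> closure S"
      unfolding closure_approachable
    proof (intro allI impI)
      fix e :: real assume e: "e > 0"
      define e' where "e' = e * \<bar>of_int d\<bar> / \<bar>lams\<bar>"
      have e': "e' > 0" unfolding e'_def using e d lams0 by simp
      define \<alpha> where "\<alpha> = max 0 (t - e')"
      define \<beta> where "\<beta> = min \<epsilon> (t + e')"
      have ab': "\<alpha> < \<beta>" unfolding \<alpha>_def \<beta>_def using eps e' t0 t1 by auto
      define x0 where "x0 = of_int m0 * sin \<theta> + of_int n0 * cos \<theta>"
      obtain p q :: int where pq: "\<bar>of_int d * (of_int p * sin \<theta> + of_int q * cos \<theta>) - ((\<alpha> + \<beta>) / 2 - x0)\<bar> < (\<beta> - \<alpha>) / 2"
        using dens[OF irr c0 d, of "(\<beta> - \<alpha>) / 2" "(\<alpha> + \<beta>) / 2 - x0"] ab' by auto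
      define m where "m = m0 + d * p"
      define n where "n = n0 + d * q"
      define k where "k = k0 + a * p + b * q"
      define xs where "xs = of_int m * sin \<theta> + of_int n * cos \<theta>"
      have xs_eq: "xs = x0 + of_int d * (of_int p * sin \<theta> + of_int q * cos \<theta>)"
        unfolding xs_def x0_def m_def n_def by (simp add: algebra_simps)
      have aux: "\<alpha>1 < xs1 \<and> xs1 < \<beta>1" if "\<bar>G - ((\<alpha>1 + \<beta>1) / 2 - y0)\<bar> < (\<beta>1 - \<alpha>1) / 2" "xs1 = y0 + G" for G y0 xs1 \<alpha>1 \<beta>1 :: real using that by (auto simp: abs_less_iff field_simps)
      have xsab0: "\<alpha> < xs \<and> xs < \<beta>" by (rule aux[OF pq xs_eq])
      then have xsab: "\<alpha> < xs" "xs < \<beta>" by auto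
      have w1: "0 \<le> xs" and w2: "xs < \<epsilon>" and close: "\<bar>xs - t\<bar> < e'"
        using xsab unfolding \<alpha>_def \<beta>_def by auto
      have lk: "d * k - a * m - b * n = l"
        using l_eq unfolding m_def n_def k_def by (simp add: algebra_simps)
      define z where "z = (of_int d * of_int k - of_int a * of_int m - of_int b * of_int n
              + lams * (of_int m * sin \<theta> + of_int n * cos \<theta>)) / (of_int d :: real)"
      have zS: "z \<in> S" unfolding key z_def using w1 w2 unfolding xs_def by blast
      have "of_int d * of_int k - of_int a * of_int m - of_int b * of_int n = (of_int l :: real)"
        using arg_cong[OF lk, of real_of_int] by simp
      then have z2: "z = (of_int l + xs * lams) / of_int d" unfolding z_def xs_def by (simp add: algebra_simps)
      have "dist z y = \<bar>(xs - t) * lams / of_int d\<bar>"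
      proof -
        have "(of_int l + xs * lams) / of_int d - (of_int l + t * lams) / of_int d = (xs - t) * lams / (of_int d :: real)"
          using d by (simp add: field_simps)
        then show ?thesis unfolding z2 y dist_real_def by simp
      qed
      also have "\<dots> = \<bar>xs - t\<bar> * \<bar>lams\<bar> / \<bar>of_int d\<bar>" by (simp add: abs_mult)
      also have "\<dots> < e' * \<bar>lams\<bar> / \<bar>of_int d\<bar>"
        using close lams0 d by (intro divide_strict_right_mono mult_strict_right_mono) auto
      also have "\<dots> = e" unfolding e'_def using lams0 d by simp
      finally show "\<exists>x\<in>S. dist x y < e" using zS by blast
    qed
  qed
  have clT: "closure S = T"
  proof
    show "closure S \<subseteq> T" using ST T_closed[OF d, of lams \<epsilon>] unfolding T_def
      by (simp add: closure_minimal)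
    show "T \<subseteq> closure S" by (rule TS)
  qed
  have TU: "T = UNIV" if big: "\<epsilon> \<ge> 1 / \<bar>lams\<bar>"
  proof (intro set_eqI iffI)
    fix y :: real
    let ?D = "of_int d * y"
    show "y \<in> T"
    proof (cases "lams > 0")
      case True
      define t where "t = frac ?D / lams"
      have "0 \<le> t" "t \<le> \<epsilon>"
        unfolding t_def using True big frac_ge_0[of ?D] frac_lt_1[of ?D]
        by (auto simp: divide_right_mono intro: order_trans[OF divide_right_mono[of _ 1]])
      moreover have "y = (of_int \<lfloor>?D\<rfloor> + t * lams) / of_int d"
        unfolding t_def using True d by (simp add: frac_def)
      ultimately show ?thesis unfolding T_def by blast
    next
      case False
      then have ln: "lams < 0" using lams0 by simp
      define t where "t = (?D - of_int \<lceil>?D\<rceil>) / lams"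
      have c1: "?D - of_int \<lceil>?D\<rceil> \<le> 0" by linarith
      have c2: "of_int \<lceil>?D\<rceil> - ?D < 1" by linarith
      have "0 \<le> t" unfolding t_def using ln c1 by (simp add: divide_nonpos_neg)
      moreover have "t \<le> \<epsilon>"
      proof -
        have "t = (of_int \<lceil>?D\<rceil> - ?D) / \<bar>lams\<bar>" unfolding t_def using ln by (simp add: field_simps)
        also have "\<dots> \<le> 1 / \<bar>lams\<bar>" using c2 ln by (intro divide_right_mono) auto
        finally show ?thesis using big by linarith
      qed
      moreover have "y = (of_int \<lceil>?D\<rceil> + t * lams) / of_int d"
        unfolding t_def using ln d by simp
      ultimately show ?thesis unfolding T_def by blast
    qed
  qed simp
  show ?thesis using clT TU unfolding T_def by auto
qed

end
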